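(* Let $f\colon X\to Y$ be a perfect map between metrizable spaces, $d$ a compatible metric on $X$, and $(M,\varrho)$ a complete metric space. Let $m,n\ge1$, $y\in Y$, and $g\in\mathcal{K}(m,n,y)$. Then there exist a neighborhood $V_y$ of $y$ in $Y$ and $\delta_y>0$ such that whenever $y'\in V_y$ and $g_1\in C(X,M)$ satisfies $\varrho(g_1(x),g(x))<\delta_y$ for all $x\in f^{-1}(y')$, we have $g_1\in\mathcal{K}(m,n,y')$.
   Context: For $A\subset X$ and $\delta>0$, $B(A,\delta)=\{x\in X:d(x,A)<\delta\}$. For $g\in C(X,M)$, $y\in Y$, $x\in f^{-1}(y)$, $C(x,g|f^{-1}(y))$ is the component of $g^{-1}(g(x))\cap f^{-1}(y)$ containing $x$. $\mathcal{K}(m,n,y)$ is the set of all $g\in C(X,M)$ such that for every subcontinuum $L\subset f^{-1}(y)$ with $\operatorname{diam} g(L)\ge1/n$ there is $x\in L$ with $C(x,g|f^{-1}(y))\subset B(L,1/m)$. *)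

theory Defs
  imports "HOL-Analysis.Analysis"
begin

definition perfect_map :: "('a::metric_space \<Rightarrow> 'b::metric_space) \<Rightarrow> bool" where
  "perfect_map f \<longleftrightarrow> continuous_on UNIV f \<and> (\<forall>S. closed S \<longrightarrow> closed (f ` S))
     \<and> (\<forall>y. compact (f -` {y}))"

definition nbhd_set :: "'a::metric_space set \<Rightarrow> real \<Rightarrow> 'a set" where
  "nbhd_set A \<delta> = {x. infdist x A < \<delta>}"

definition fib_comp :: "('a \<Rightarrow> 'c) \<Rightarrow> ('a \<Rightarrow> 'b) \<Rightarrow> 'b \<Rightarrow> 'a::topological_space \<Rightarrow> 'a set" where
  "fib_comp g f y x = connected_component_set (g -` {g x} \<inter> f -` {y}) x"

definition K_class :: "('a::metric_space \<Rightarrow> 'b) \<Rightarrow> nat \<Rightarrow> nat \<Rightarrow> 'b \<Rightarrow> ('a \<Rightarrow> 'c::metric_space) set" where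
  "K_class f m n y = {g. continuous_on UNIV g \<and>
     (\<forall>L. L \<subseteq> f -` {y} \<and> L \<noteq> {} \<and> compact L \<and> connected L \<and> diameter (g ` L) \<ge> 1 / real n
        \<longrightarrow> (\<exists>x\<in>L. fib_comp g f y x \<subseteq> nbhd_set L (1 / real m)))}"

end

theory Submission
  imports Defs "HOL-Library.Diagonal_Subsequence"
begin

lemma infdist_lessE:
  assumes "infdist x A < e" "A \<noteq> {}"
  shows "\<exists>a\<in>A. dist x a < e"
proof -
  have "Inf (dist x ` A) < e" using assms by (simp add: infdist_notempty)
  then show ?thesis using cInf_lessD[of "dist x ` A" e] assms(2) by auto
qed

lemma comp_clopen_sep:
  fixes P :: "'a::metric_space set"
  assumes P: "compact P" and xP: "x \<in> P" and sub: "connected_component_set P x \<subseteq> W" and W: "open W"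
  obtains U V where "compact U" "compact V" "U \<inter> V = {}" "U \<union> V = P"
    "connected_component_set P x \<subseteq> U" "U \<subseteq> W"
proof -
  let ?X = "top_of_set P"
  let ?C = "connected_component_set P x"
  have eq: "connected_component_of_set ?X x = ?C"
    by (auto simp: connected_component_of_def connected_component_def connectedin_subtopology)
  have lc: "locally_compact_space ?X"
    by (intro compact_imp_locally_compact_space) (simp add: compact_space_subtopology P)
  have H: "Hausdorff_space ?X"
    by (simp add: Hausdorff_space_euclidean Hausdorff_space_subtopology)
  have C: "?C \<in> connected_components_of ?X"
    using connected_component_in_connected_components_of[of ?X x] xP eq by simp
  have "closed ?C" using P by (simp add: closed_connected_component compact_imp_closed)
  then have "compact ?C" using P connected_component_subset[of P x]
    by (metis closed_Int_compact inf.absorb1)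
  then have cC: "compactin ?X ?C" by (simp add: compactin_subtopology connected_component_subset)
  have oW: "openin ?X (P \<inter> W)" using W by (auto simp: openin_open)
  have "?C \<subseteq> P \<inter> W" using sub connected_component_subset by blast
  then obtain U V where UV: "openin ?X U" "openin ?X V" "disjnt U V" "U \<union> V = topspace ?X" "?C \<subseteq> U" "U \<subseteq> P \<inter> W"
    using wilder_locally_compact_component_thm[OF lc H C cC oW] by blast
  have tU: "U \<union> V = P" using UV by simp
  have "closedin ?X U"
  proof -
    have "U = topspace ?X - V" using UV by (auto simp: disjnt_def)
    then show ?thesis using UV(2) by auto
  qed
  moreover have "closedin ?X V"
  proof -
    have "V = topspace ?X - U" using UV by (auto simp: disjnt_def)
    then show ?thesis using UV(1) by auto
  qed
  ultimately have "closed U" "closed V" using P compact_imp_closed closedin_closed_trans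
    by blast+
  then have "compact U" "compact V" using tU P
    by (metis closed_Int_compact inf.absorb1 sup_ge1 sup_ge2)+
  then show thesis using that UV tU by (auto simp: disjnt_def)
qed

lemma open_infdist_less: "open {w. infdist w A < e}"
  by (rule open_Collect_less) (auto intro: continuous_on_infdist continuous_on_id)

lemma sep_compact_closed:
  fixes S T :: "'a::metric_space set"
  assumes "compact S" "closed T" "S \<inter> T = {}"
  shows "\<exists>d>0. \<forall>x\<in>S. \<forall>y\<in>T. d \<le> dist x y"
proof (cases "S = {} \<or> T = {}")
  case True then show ?thesis by (auto intro: exI[of _ 1])
next
  case False
  have "continuous_on S (\<lambda>x. infdist x T)" by (intro continuous_on_infdist continuous_on_id)
  then obtain x0 where x0: "x0 \<in> S" "\<forall>x\<in>S. infdist x0 T \<le> infdist x T"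
    using continuous_attains_inf[OF assms(1)] False by blast
  have "infdist x0 T > 0" using infdist_pos_not_in_closed[OF assms(2)] False x0 assms(3) by blast
  moreover have "\<forall>x\<in>S. \<forall>y\<in>T. infdist x0 T \<le> dist x y"
    using x0 infdist_le by (meson order_trans)
  ultimately show ?thesis by blast
qed

lemma haus_limit_connected:
  fixes \<Lambda> :: "nat \<Rightarrow> 'a::metric_space set"
  assumes L: "compact L" and con: "\<And>k. connected (\<Lambda> k)"
    and haus: "\<And>e. e > 0 \<Longrightarrow> eventually (\<lambda>k. (\<forall>w\<in>\<Lambda> k. infdist w L < e) \<and> (\<forall>w\<in>L. infdist w (\<Lambda> k) < e)) sequentially"
    and ne: "\<And>k. \<Lambda> k \<noteq> {}"
  shows "connected L"
proof (rule ccontr)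
  assume "\<not> connected L"
  then obtain A B where AB: "closed A" "closed B" "A \<noteq> {}" "B \<noteq> {}" "A \<union> B = L" "A \<inter> B = {}"
    using connected_closed_set[of L] L compact_imp_closed by blast
  have "compact A" using AB L by (metis closed_Int_compact inf.absorb1 sup_ge1)
  then obtain d where d: "d > 0" "\<forall>x\<in>A. \<forall>y\<in>B. d \<le> dist x y"
    using sep_compact_closed[of A B] AB by blast
  define e where "e = d / 3"
  have e: "e > 0" using d by (simp add: e_def)
  obtain k where k: "\<forall>w\<in>\<Lambda> k. infdist w L < e" "\<forall>w\<in>L. infdist w (\<Lambda> k) < e"
    using eventually_sequentially[THEN iffD1, OF haus[OF e]] by blast
  define UA where "UA = {w. infdist w A < e}"
  define UB where "UB = {w. infdist w B < e}"
  have "open UA" "open UB" by (simp_all add: UA_def UB_def open_infdist_less)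
  moreover have "UA \<inter> UB \<inter> \<Lambda> k = {}"
  proof (rule ccontr)
    assume "UA \<inter> UB \<inter> \<Lambda> k \<noteq> {}"
    then obtain w where "infdist w A < e" "infdist w B < e" by (auto simp: UA_def UB_def)
    then obtain a b where "a \<in> A" "b \<in> B" "dist w a < e" "dist w b < e"
      using infdist_lessE AB by metis
    then have "dist a b < d" using dist_triangle3[of a b w] using d(1) unfolding e_def by linarith
    then show False using d \<open>a \<in> A\<close> \<open>b \<in> B\<close> by fastforce
  qed
  moreover have "\<Lambda> k \<subseteq> UA \<union> UB"
  proof
    fix w assume "w \<in> \<Lambda> k"
    then obtain p where "p \<in> L" "dist w p < e" using k infdist_lessE AB by (metis Un_empty)
    then show "w \<in> UA \<union> UB"
      using AB infdist_le[of p A w] infdist_le[of p B w] by (auto simp: UA_def UB_def)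
  qed
  moreover have "UA \<inter> \<Lambda> k \<noteq> {}"
  proof -
    obtain a where "a \<in> A" using AB by blast
    then obtain p where "p \<in> \<Lambda> k" "dist a p < e" using k infdist_lessE ne AB by (metis Un_iff)
    then have "infdist p A < e" using infdist_le[OF \<open>a \<in> A\<close>, of p] by (simp add: dist_commute)
    then show ?thesis using \<open>p \<in> \<Lambda> k\<close> by (auto simp: UA_def)
  qed
  moreover have "UB \<inter> \<Lambda> k \<noteq> {}"
  proof -
    obtain a where "a \<in> B" using AB by blast
    then obtain p where "p \<in> \<Lambda> k" "dist a p < e" using k infdist_lessE ne AB by (metis Un_iff)
    then have "infdist p B < e" using infdist_le[OF \<open>a \<in> B\<close>, of p] by (simp add: dist_commute)
    then show ?thesis using \<open>p \<in> \<Lambda> k\<close> by (auto simp: UB_def)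
  qed
  ultimately show False using connectedD[OF con[of k]] by blast
qed

lemma haus_subseq:
  fixes \<Lambda> :: "nat \<Rightarrow> 'a::metric_space set"
  assumes S: "compact S" and sub: "\<And>k. \<Lambda> k \<subseteq> S" and ne: "\<And>k. \<Lambda> k \<noteq> {}"
  obtains r L where "strict_mono r" "compact L" "L \<subseteq> S" "L \<noteq> {}"
    "\<forall>e>0. eventually (\<lambda>k. (\<forall>w\<in>\<Lambda> (r k). infdist w L < e) \<and> (\<forall>w\<in>L. infdist w (\<Lambda> (r k)) < e)) sequentially"
proof -
  have Sne: "S \<noteq> {}" using sub ne by blast
  define \<phi> where "\<phi> k w = infdist w (\<Lambda> k)" for k w
  have "\<forall>j::nat. \<exists>T. T \<subseteq> S \<and> finite T \<and> S \<subseteq> (\<Union>c\<in>T. ball c (1 / Suc j))"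
  proof
    fix j :: nat
    have cov: "S \<subseteq> (\<Union>c\<in>S. ball c (1 / Suc j))"
    proof
      fix x assume "x \<in> S"
      moreover have "x \<in> ball x (1 / Suc j)" by simp
      ultimately show "x \<in> (\<Union>c\<in>S. ball c (1 / Suc j))" by blast
    qed
    have op: "\<And>c. c \<in> S \<Longrightarrow> open (ball c (1 / Suc j))" by simp
    obtain T where "T \<subseteq> S" "finite T" "S \<subseteq> (\<Union>c\<in>T. ball c (1 / Suc j))"
      by (rule compactE_image[OF S op cov])
    then show "\<exists>T. T \<subseteq> S \<and> finite T \<and> S \<subseteq> (\<Union>c\<in>T. ball c (1 / Suc j))" by blast
  qed
  from choice[OF this] obtain T where T0: "\<forall>j. T j \<subseteq> S \<and> finite (T j) \<and> S \<subseteq> (\<Union>c\<in>T j. ball c (1 / Suc j))"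
    by blast
  then have T: "\<And>j. T j \<subseteq> S" "\<And>j. finite (T j)" "\<And>j. S \<subseteq> (\<Union>c\<in>T j. ball c (1 / Suc j))"
    by blast+
  define Dset where "Dset = (\<Union>j. T j)"
  have cD: "countable Dset" unfolding Dset_def using T(2) by (simp add: countable_finite)
  have neD: "Dset \<noteq> {}" using T(3)[of 0] Sne by (auto simp: Dset_def)
  define D where "D = from_nat_into Dset"
  have rD: "range D = Dset" using range_from_nat_into[OF neD cD] by (simp add: D_def)
  have DS: "D i \<in> S" for i using rD T(1) by (auto simp: Dset_def)
  have dense: "\<exists>i. dist w (D i) < e" if "w \<in> S" "e > 0" for w e
  proof -
    obtain j where j: "inverse (real (Suc j)) < e" using reals_Archimedean[OF \<open>e > 0\<close>] by blast
    obtain c where c: "c \<in> T j" "dist c w < 1 / Suc j" using T(3)[of j] \<open>w \<in> S\<close> by auto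
    have "c \<in> range D" using c rD by (auto simp: Dset_def)
    then obtain i where "c = D i" by auto
    moreover have "dist w c < e" using c(2) j by (simp add: dist_commute inverse_eq_divide)
    ultimately show ?thesis by blast
  qed
  have bS: "bounded S" using S compact_imp_bounded by blast
  define B where "B = diameter S"
  have phi_nn: "0 \<le> \<phi> k w" for k w by (simp add: \<phi>_def infdist_nonneg)
  have phi_le: "\<phi> k w \<le> B" if "w \<in> S" for k w
  proof -
    obtain a where "a \<in> \<Lambda> k" using ne by blast
    then have "\<phi> k w \<le> dist w a" by (simp add: \<phi>_def infdist_le)
    also have "\<dots> \<le> B" using diameter_bounded_bound[OF bS that] \<open>a \<in> \<Lambda> k\<close> sub by (auto simp: B_def)
    finally show ?thesis .
  qed
  have lip: "\<bar>\<phi> k w - \<phi> k v\<bar> \<le> dist w v" for k w v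
    by (simp add: \<phi>_def infdist_triangle_abs)
  interpret subseqs "\<lambda>i s. convergent (\<lambda>k. \<phi> (s k) (D i))"
  proof
    fix i and s :: "nat \<Rightarrow> nat" assume "strict_mono s"
    have "bounded (range (\<lambda>k. \<phi> (s k) (D i)))"
      unfolding bounded_real using phi_nn phi_le[OF DS] by (auto intro!: exI[of _ B])
    then obtain l r where "strict_mono r" "((\<lambda>k. \<phi> (s k) (D i)) \<circ> r) \<longlonglongrightarrow> l"
      using bounded_imp_convergent_subsequence by blast
    then show "\<exists>r'. strict_mono r' \<and> convergent (\<lambda>k. \<phi> ((s \<circ> r') k) (D i))"
      by (auto simp: convergent_def o_def)
  qed
  define r where "r = diagseq"
  have r: "strict_mono r" by (simp add: r_def subseq_diagseq)
  have conv: "convergent (\<lambda>k. \<phi> (r k) (D i))" for i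
  proof -
    have "convergent (\<lambda>k. \<phi> ((diagseq \<circ> (+) (Suc i)) k) (D i))"
    proof (rule diagseq_holds)
      fix r' s n assume "strict_mono (r'::nat\<Rightarrow>nat)" "convergent (\<lambda>k. \<phi> (s k) (D n))"
      then show "convergent (\<lambda>k. \<phi> ((s \<circ> r') k) (D n))"
        using convergent_subseq_convergent[of "\<lambda>k. \<phi> (s k) (D n)" r'] by (simp add: o_def)
    qed
    then show ?thesis
      using convergent_ignore_initial_segment[of "\<lambda>k. \<phi> (r k) (D i)" "Suc i"]
      by (simp add: r_def o_def add.commute)
  qed
  have "uniformly_Cauchy_on S (\<lambda>k. \<phi> (r k))"
  proof (rule uniformly_Cauchy_onI)
    fix e :: real assume e: "e > 0"
    have "S \<subseteq> (\<Union>i\<in>UNIV. ball (D i) (e/3))"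
    proof
      fix w assume "w \<in> S"
      then obtain i where "dist w (D i) < e/3" using dense e by (meson divide_pos_pos zero_less_numeral)
      then show "w \<in> (\<Union>i\<in>UNIV. ball (D i) (e/3))" by (auto simp: dist_commute)
    qed
    moreover have "\<And>i. i \<in> UNIV \<Longrightarrow> open (ball (D i) (e/3))" by simp
    ultimately obtain I where I: "I \<subseteq> UNIV" "finite I" "S \<subseteq> (\<Union>i\<in>I. ball (D i) (e/3))"
      using compactE_image[OF S] by metis
    have "\<forall>i\<in>I. eventually (\<lambda>N. \<forall>m\<ge>N. \<forall>n\<ge>N. dist (\<phi> (r m) (D i)) (\<phi> (r n) (D i)) < e/3) sequentially"
    proof
      fix i
      obtain M where "\<forall>m\<ge>M. \<forall>n\<ge>M. dist (\<phi> (r m) (D i)) (\<phi> (r n) (D i)) < e/3"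
        using metric_CauchyD[OF convergent_Cauchy[OF conv[of i]], of "e/3"] e by auto
      then show "eventually (\<lambda>N. \<forall>m\<ge>N. \<forall>n\<ge>N. dist (\<phi> (r m) (D i)) (\<phi> (r n) (D i)) < e/3) sequentially"
        unfolding eventually_sequentially by (meson order_trans)
    qed
    from eventually_ball_finite[OF I(2) this]
    obtain N where N: "\<forall>i\<in>I. \<forall>m\<ge>N. \<forall>n\<ge>N. dist (\<phi> (r m) (D i)) (\<phi> (r n) (D i)) < e/3"
      unfolding eventually_sequentially by blast
    show "\<exists>M. \<forall>x\<in>S. \<forall>m\<ge>M. \<forall>n\<ge>M. dist (\<phi> (r m) x) (\<phi> (r n) x) < e"
    proof (intro exI ballI allI impI)
      fix x m n assume "x \<in> S" "N \<le> m" "N \<le> n"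
      then obtain i where i: "i \<in> I" "dist (D i) x < e/3" using I by auto
      have "dist (\<phi> (r m) (D i)) (\<phi> (r n) (D i)) < e/3" using N i \<open>N \<le> m\<close> \<open>N \<le> n\<close> by blast
      moreover have "\<bar>\<phi> (r m) x - \<phi> (r m) (D i)\<bar> \<le> dist x (D i)" "\<bar>\<phi> (r n) x - \<phi> (r n) (D i)\<bar> \<le> dist x (D i)"
        using lip by blast+
      moreover have "dist x (D i) < e/3" using i(2) by (simp add: dist_commute)
      ultimately show "dist (\<phi> (r m) x) (\<phi> (r n) x) < e"
        unfolding dist_real_def by linarith
    qed
  qed
  then obtain \<psi> where ul: "uniform_limit S (\<lambda>k. \<phi> (r k)) \<psi> sequentially"
    using Cauchy_uniformly_convergent uniformly_convergent_on_def by blast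
  have cont: "continuous_on S \<psi>"
    by (rule uniform_limit_theorem[OF _ ul]) (auto simp: \<phi>_def intro!: always_eventually continuous_on_infdist continuous_on_id)
  have unif: "eventually (\<lambda>k. \<forall>w\<in>S. dist (\<phi> (r k) w) (\<psi> w) < e) sequentially" if "e > 0" for e
    using uniform_limitD[OF ul that] .
  have psi_nn: "0 \<le> \<psi> w" if "w \<in> S" for w
    using tendsto_uniform_limitI[OF ul that] phi_nn
    by (intro tendsto_lowerbound[of "\<lambda>k. \<phi> (r k) w"]) (auto intro: always_eventually)
  define L where "L = {w\<in>S. \<psi> w = 0}"
  have "closed L" unfolding L_def using continuous_closed_preimage_constant[OF cont] S compact_imp_closed by blast
  then have cL: "compact L" using S closed_Int_compact[of L S] by (simp add: L_def Int_absorb2)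
  have LS: "L \<subseteq> S" by (auto simp: L_def)
  have Lne: "L \<noteq> {}"
  proof -
    have "\<forall>k. \<exists>x. x \<in> \<Lambda> (r k)" using ne by blast
    from choice[OF this] obtain a where a: "\<And>k. a k \<in> \<Lambda> (r k)" by blast
    then have "\<forall>k. a k \<in> S" using sub by blast
    then obtain a0 t where a0: "a0 \<in> S" "strict_mono t" "(a \<circ> t) \<longlonglongrightarrow> a0"
      using seq_compactE[OF compact_imp_seq_compact[OF S]] by metis
    have "\<psi> a0 \<le> 0"
    proof (rule field_le_epsilon)
      fix e :: real assume e: "e > 0"
      have "eventually (\<lambda>k. dist (a (t k)) a0 < e/2) sequentially"
        using tendstoD[OF a0(3), of "e/2"] e by (simp add: o_def)
      moreover have "eventually (\<lambda>k. \<forall>w\<in>S. dist (\<phi> (r (t k)) w) (\<psi> w) < e/2) sequentially"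
        using eventually_subseq[OF a0(2) unif[of "e/2"]] e by simp
      ultimately have "eventually (\<lambda>k. dist (a (t k)) a0 < e/2 \<and> dist (\<phi> (r (t k)) a0) (\<psi> a0) < e/2) sequentially"
        by eventually_elim (use a0(1) in auto)
      then obtain k where k: "dist (a (t k)) a0 < e/2" "dist (\<phi> (r (t k)) a0) (\<psi> a0) < e/2"
        unfolding eventually_sequentially by blast
      have "\<phi> (r (t k)) a0 \<le> dist a0 (a (t k))" using a[of "t k"] by (simp add: \<phi>_def infdist_le)
      then show "\<psi> a0 \<le> 0 + e" using k unfolding dist_real_def by (simp add: dist_commute; linarith)
    qed
    then have "a0 \<in> L" using psi_nn[OF a0(1)] a0(1) by (simp add: L_def)
    then show ?thesis by blast
  qed
  show thesis
  proof (rule that[OF r cL LS Lne], intro allI impI)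
    fix e :: real assume e: "e > 0"
    have ev1: "eventually (\<lambda>k. \<forall>w\<in>L. infdist w (\<Lambda> (r k)) < e) sequentially"
      using unif[OF e] by eventually_elim (auto simp: L_def \<phi>_def dist_real_def)
    define T0 where "T0 = {w\<in>S. e \<le> infdist w L}"
    obtain \<theta> where th: "\<theta> > 0" "\<forall>w\<in>T0. \<theta> \<le> \<psi> w"
    proof (cases "T0 = {}")
      case True then show thesis using that[of 1] by auto
    next
      case False
      have "closed {w. e \<le> infdist w L}"
        by (rule closed_Collect_le) (auto intro: continuous_on_infdist continuous_on_id)
      moreover have "T0 = {w. e \<le> infdist w L} \<inter> S" by (auto simp: T0_def)
      ultimately have "compact T0" using S closed_Int_compact by metis
      moreover have "continuous_on T0 \<psi>" using cont by (rule continuous_on_subset) (auto simp: T0_def)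
      ultimately obtain w0 where w0: "w0 \<in> T0" "\<forall>w\<in>T0. \<psi> w0 \<le> \<psi> w"
        using continuous_attains_inf False by blast
      have "\<psi> w0 \<noteq> 0"
      proof
        assume "\<psi> w0 = 0"
        then have "w0 \<in> L" using w0 by (simp add: L_def T0_def)
        then have "infdist w0 L = 0" by (simp add: infdist_zero)
        then show False using w0 e by (simp add: T0_def)
      qed
      then have "\<psi> w0 > 0" using psi_nn w0 by (force simp: T0_def)
      then show thesis using that w0 by blast
    qed
    have ev2: "eventually (\<lambda>k. \<forall>w\<in>\<Lambda> (r k). infdist w L < e) sequentially"
      using unif[OF th(1)]
    proof eventually_elim
      case (elim k)
      show ?case
      proof
        fix w assume w: "w \<in> \<Lambda> (r k)"
        then have "w \<in> S" "\<phi> (r k) w = 0" using sub by (auto simp: \<phi>_def infdist_zero)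
        then have "\<psi> w < \<theta>" using elim by (auto simp: dist_real_def)
        then have "w \<notin> T0" using th by force
        then show "infdist w L < e" using \<open>w \<in> S\<close> by (auto simp: T0_def)
      qed
    qed
    show "eventually (\<lambda>k. (\<forall>w\<in>\<Lambda> (r k). infdist w L < e) \<and> (\<forall>w\<in>L. infdist w (\<Lambda> (r k)) < e)) sequentially"
      using ev1 ev2 by eventually_elim blast
  qed
qed

lemma compact_seq_limit:
  fixes f :: "nat \<Rightarrow> 'a::topological_space"
  assumes lim: "f \<longlonglongrightarrow> l"
  shows "compact (insert l (range f))"
proof (rule compactI)
  fix C assume C: "\<forall>t\<in>C. open t" "insert l (range f) \<subseteq> \<Union>C"
  then obtain U where U: "U \<in> C" "l \<in> U" by blast
  then have "eventually (\<lambda>n. f n \<in> U) sequentially" using C(1) lim topological_tendstoD by blast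
  then obtain N where N: "\<forall>n\<ge>N. f n \<in> U" unfolding eventually_sequentially by blast
  have "\<forall>n. \<exists>V. V \<in> C \<and> f n \<in> V" using C(2) by blast
  from choice[OF this] obtain V where V: "\<And>n. V n \<in> C" "\<And>n. f n \<in> V n" by blast
  let ?C' = "insert U (V ` {..<N})"
  have "insert l (range f) \<subseteq> \<Union>?C'"
  proof
    fix x assume "x \<in> insert l (range f)"
    then show "x \<in> \<Union>?C'"
    proof
      assume "x = l" then show ?thesis using U by blast
    next
      assume "x \<in> range f"
      then obtain n where "x = f n" by blast
      then show ?thesis using N V(2)[of n] by (cases "n < N") auto
    qed
  qed
  moreover have "?C' \<subseteq> C" using U V by blast
  ultimately show "\<exists>C'. C' \<subseteq> C \<and> finite C' \<and> insert l (range f) \<subseteq> \<Union>C'" by blast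
qed

lemma perfect_preimage_compact:
  assumes "perfect_map f" "compact K"
  shows "compact (f -` K)"
proof -
  have "closed_map euclidean euclidean f"
    using assms(1) unfolding perfect_map_def closed_map_def by (simp add: closed_closedin[symmetric])
  moreover have "\<forall>y\<in>topspace euclidean. compactin euclidean {x \<in> topspace euclidean. f x = y}"
    using assms(1) unfolding perfect_map_def by (simp add: vimage_def)
  ultimately have "proper_map euclidean euclidean f" by (simp add: proper_map_def)
  then have "compactin euclidean {x. x \<in> topspace euclidean \<and> f x \<in> K}"
    using compactin_proper_map_preimage assms(2) by (metis compactin_euclidean_iff)
  then show ?thesis by (simp add: vimage_def)
qed

theorem lemma2p3:
  fixes f :: "'a::metric_space \<Rightarrow> 'b::metric_space"
    and g :: "'a \<Rightarrow> 'c::complete_space"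
    and m n :: nat and y :: 'b
  assumes "perfect_map f" and "m \<ge> 1" and "n \<ge> 1"
    and "g \<in> K_class f m n y"
  shows "\<exists>V \<delta>. open V \<and> y \<in> V \<and> \<delta> > 0 \<and>
           (\<forall>y'\<in>V. \<forall>g1 :: 'a \<Rightarrow> 'c. continuous_on UNIV g1 \<and>
                (\<forall>x\<in>f -` {y'}. dist (g1 x) (g x) < \<delta>) \<longrightarrow> g1 \<in> K_class f m n y')"
proof (rule ccontr)
  assume neg: "\<not> ?thesis"
  have cf: "continuous_on UNIV f" using assms(1) by (simp add: perfect_map_def)
  have fib: "\<And>y. compact (f -` {y})" using assms(1) by (simp add: perfect_map_def)
  have gc: "continuous_on UNIV g" using assms(4) by (simp add: K_class_def)
  have gK: "\<And>L. L \<subseteq> f -` {y} \<Longrightarrow> L \<noteq> {} \<Longrightarrow> compact L \<Longrightarrow> connected L \<Longrightarrow> diameter (g ` L) \<ge> 1 / real n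
     \<Longrightarrow> \<exists>x\<in>L. fib_comp g f y x \<subseteq> nbhd_set L (1 / real m)"
    using assms(4) by (simp add: K_class_def)
  have "\<forall>k::nat. \<exists>y'. \<exists>G :: 'a \<Rightarrow> 'c. \<exists>\<Lambda>. dist y' y < 1 / real (Suc k) \<and> continuous_on UNIV G
     \<and> (\<forall>x\<in>f -` {y'}. dist (G x) (g x) < 1 / real (Suc k)) \<and> \<Lambda> \<subseteq> f -` {y'} \<and> \<Lambda> \<noteq> {}
     \<and> compact \<Lambda> \<and> connected \<Lambda> \<and> 1 / real n \<le> diameter (G ` \<Lambda>)
     \<and> (\<forall>x\<in>\<Lambda>. \<not> fib_comp G f y' x \<subseteq> nbhd_set \<Lambda> (1 / real m))"
  proof
    fix k :: nat
    have pos: "1 / real (Suc k) > 0" by simp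
    have "\<not> (\<forall>y'\<in>ball y (1 / real (Suc k)). \<forall>g1 :: 'a \<Rightarrow> 'c. continuous_on UNIV g1 \<and>
                (\<forall>x\<in>f -` {y'}. dist (g1 x) (g x) < 1 / real (Suc k)) \<longrightarrow> g1 \<in> K_class f m n y')"
    proof
      assume "\<forall>y'\<in>ball y (1 / real (Suc k)). \<forall>g1 :: 'a \<Rightarrow> 'c. continuous_on UNIV g1 \<and>
                (\<forall>x\<in>f -` {y'}. dist (g1 x) (g x) < 1 / real (Suc k)) \<longrightarrow> g1 \<in> K_class f m n y'"
      then have "open (ball y (1 / real (Suc k))) \<and> y \<in> ball y (1 / real (Suc k)) \<and> 1 / real (Suc k) > 0 \<and>
           (\<forall>y'\<in>ball y (1 / real (Suc k)). \<forall>g1 :: 'a \<Rightarrow> 'c. continuous_on UNIV g1 \<and>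
                (\<forall>x\<in>f -` {y'}. dist (g1 x) (g x) < 1 / real (Suc k)) \<longrightarrow> g1 \<in> K_class f m n y')"
        using pos by simp
      then show False using neg by blast
    qed
    then obtain y' and g1 :: "'a \<Rightarrow> 'c" where y': "dist y y' < 1 / real (Suc k)" and g1: "continuous_on UNIV g1"
      "\<forall>x\<in>f -` {y'}. dist (g1 x) (g x) < 1 / real (Suc k)" "g1 \<notin> K_class f m n y'"
      by auto
    then obtain \<Lambda> where "\<Lambda> \<subseteq> f -` {y'}" "\<Lambda> \<noteq> {}" "compact \<Lambda>" "connected \<Lambda>" "1 / real n \<le> diameter (g1 ` \<Lambda>)"
      "\<forall>x\<in>\<Lambda>. \<not> fib_comp g1 f y' x \<subseteq> nbhd_set \<Lambda> (1 / real m)"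
      unfolding K_class_def by auto
    then show "\<exists>y'. \<exists>G :: 'a \<Rightarrow> 'c. \<exists>\<Lambda>. dist y' y < 1 / real (Suc k) \<and> continuous_on UNIV G
     \<and> (\<forall>x\<in>f -` {y'}. dist (G x) (g x) < 1 / real (Suc k)) \<and> \<Lambda> \<subseteq> f -` {y'} \<and> \<Lambda> \<noteq> {}
     \<and> compact \<Lambda> \<and> connected \<Lambda> \<and> 1 / real n \<le> diameter (G ` \<Lambda>)
     \<and> (\<forall>x\<in>\<Lambda>. \<not> fib_comp G f y' x \<subseteq> nbhd_set \<Lambda> (1 / real m))"
      using y' g1(1,2) by (metis dist_commute)
  qed
  from choice[OF this] obtain ys where "\<forall>k. \<exists>G :: 'a \<Rightarrow> 'c. \<exists>\<Lambda>. dist (ys k) y < 1 / real (Suc k) \<and> continuous_on UNIV G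
     \<and> (\<forall>x\<in>f -` {ys k}. dist (G x) (g x) < 1 / real (Suc k)) \<and> \<Lambda> \<subseteq> f -` {ys k} \<and> \<Lambda> \<noteq> {}
     \<and> compact \<Lambda> \<and> connected \<Lambda> \<and> 1 / real n \<le> diameter (G ` \<Lambda>)
     \<and> (\<forall>x\<in>\<Lambda>. \<not> fib_comp G f (ys k) x \<subseteq> nbhd_set \<Lambda> (1 / real m))" by blast
  from choice[OF this] obtain Gs where "\<forall>k. \<exists>\<Lambda>. dist (ys k) y < 1 / real (Suc k) \<and> continuous_on UNIV (Gs k)
     \<and> (\<forall>x\<in>f -` {ys k}. dist (Gs k x) (g x) < 1 / real (Suc k)) \<and> \<Lambda> \<subseteq> f -` {ys k} \<and> \<Lambda> \<noteq> {}
     \<and> compact \<Lambda> \<and> connected \<Lambda> \<and> 1 / real n \<le> diameter (Gs k ` \<Lambda>)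
     \<and> (\<forall>x\<in>\<Lambda>. \<not> fib_comp (Gs k) f (ys k) x \<subseteq> nbhd_set \<Lambda> (1 / real m))" by blast
  from choice[OF this] obtain Ls where P: "\<forall>k. dist (ys k) y < 1 / real (Suc k) \<and> continuous_on UNIV (Gs k)
     \<and> (\<forall>x\<in>f -` {ys k}. dist (Gs k x) (g x) < 1 / real (Suc k)) \<and> Ls k \<subseteq> f -` {ys k} \<and> Ls k \<noteq> {}
     \<and> compact (Ls k) \<and> connected (Ls k) \<and> 1 / real n \<le> diameter (Gs k ` Ls k)
     \<and> (\<forall>x\<in>Ls k. \<not> fib_comp (Gs k) f (ys k) x \<subseteq> nbhd_set (Ls k) (1 / real m))" by blast
  have ysd: "\<And>k. dist (ys k) y < 1 / real (Suc k)" and Gc: "\<And>k. continuous_on UNIV (Gs k)"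
    and Gd: "\<And>k x. f x = ys k \<Longrightarrow> dist (Gs k x) (g x) < 1 / real (Suc k)"
    and Lf: "\<And>k. Ls k \<subseteq> f -` {ys k}" and Lne: "\<And>k. Ls k \<noteq> {}" and Lc: "\<And>k. compact (Ls k)"
    and Lcon: "\<And>k. connected (Ls k)" and Ldiam: "\<And>k. 1 / real n \<le> diameter (Gs k ` Ls k)"
    and Lbad: "\<And>k x. x \<in> Ls k \<Longrightarrow> \<not> fib_comp (Gs k) f (ys k) x \<subseteq> nbhd_set (Ls k) (1 / real m)"
    using P by auto
  have small: "\<exists>N. \<forall>k\<ge>N. 1 / real (Suc k) < \<tau>" if tau: "\<tau> > 0" for \<tau> :: real
  proof -
    obtain N where N: "inverse (real (Suc N)) < \<tau>" using reals_Archimedean[OF tau] by blast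
    have "1 / real (Suc k) < \<tau>" if "k \<ge> N" for k
    proof -
      have "1 / real (Suc k) \<le> 1 / real (Suc N)" using that by (simp add: frac_le)
      then show ?thesis using N by (simp add: inverse_eq_divide)
    qed
    then show ?thesis by blast
  qed
  have ysl: "ys \<longlonglongrightarrow> y"
  proof (rule metric_LIMSEQ_I)
    fix \<tau> :: real assume "\<tau> > 0"
    then obtain N where "\<forall>k\<ge>N. 1 / real (Suc k) < \<tau>" using small by blast
    then show "\<exists>no. \<forall>k\<ge>no. dist (ys k) y < \<tau>" using ysd by (meson order.strict_trans)
  qed
  define S where "S = f -` insert y (range ys)"
  have cS: "compact S" unfolding S_def
    by (rule perfect_preimage_compact[OF assms(1) compact_seq_limit[OF ysl]])
  have LS: "\<And>k. Ls k \<subseteq> S" using Lf by (auto simp: S_def)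
  have FS: "f -` {y} \<subseteq> S" by (auto simp: S_def)
  obtain r L0 where r: "strict_mono r" and cL0: "compact L0" and L0S: "L0 \<subseteq> S" and L0ne: "L0 \<noteq> {}"
    and hausA: "\<forall>e>0. eventually (\<lambda>k. (\<forall>w\<in>Ls (r k). infdist w L0 < e) \<and> (\<forall>w\<in>L0. infdist w (Ls (r k)) < e)) sequentially"
    by (rule haus_subseq[of S Ls, OF cS LS Lne])
  have haus: "\<And>e. e > 0 \<Longrightarrow> eventually (\<lambda>k. (\<forall>w\<in>Ls (r k). infdist w L0 < e) \<and> (\<forall>w\<in>L0. infdist w (Ls (r k)) < e)) sequentially"
    using hausA by blast
  have eps: "eventually (\<lambda>k. 1 / real (Suc (r k)) < \<tau>) sequentially" if tau: "\<tau> > 0" for \<tau> :: real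
  proof -
    obtain N where N: "\<forall>k\<ge>N. 1 / real (Suc k) < \<tau>" using small[OF tau] by blast
    have "\<forall>k\<ge>N. 1 / real (Suc (r k)) < \<tau>" using N seq_suble[OF r] le_trans by blast
    then show ?thesis unfolding eventually_sequentially by blast
  qed
  have Ylim: "eventually (\<lambda>k. dist (ys (r k)) y < \<tau>) sequentially" if "\<tau> > 0" for \<tau> :: real
    using eps[OF that] by eventually_elim (use ysd in \<open>meson order.strict_trans\<close>)
  have L0F: "L0 \<subseteq> f -` {y}"
  proof
    fix w assume w: "w \<in> L0"
    show "w \<in> f -` {y}"
    proof (rule ccontr)
      assume "w \<notin> f -` {y}"
      then have \<tau>: "dist (f w) y > 0" by simp
      obtain d where d: "d > 0" "\<forall>x'. dist x' w < d \<longrightarrow> dist (f x') (f w) < dist (f w) y / 2"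
        using cf \<tau> unfolding continuous_on_iff by (metis UNIV_I half_gt_zero)
      have "eventually (\<lambda>k. (\<forall>w\<in>L0. infdist w (Ls (r k)) < d) \<and> dist (ys (r k)) y < dist (f w) y / 2) sequentially"
        using haus[OF d(1)] Ylim[OF half_gt_zero[OF \<tau>]] by eventually_elim auto
      then obtain k where k: "\<forall>w\<in>L0. infdist w (Ls (r k)) < d" "dist (ys (r k)) y < dist (f w) y / 2"
        unfolding eventually_sequentially by blast
      obtain p where p: "p \<in> Ls (r k)" "dist w p < d" using infdist_lessE[of w "Ls (r k)" d] k(1) w Lne by blast
      have "f p = ys (r k)" using p Lf by blast
      moreover have "dist (f p) (f w) < dist (f w) y / 2" using d p by (simp add: dist_commute)
      ultimately have "dist (f w) y < dist (f w) y"
        using dist_triangle[of "f w" y "f p"] k(2) by (simp add: dist_commute)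
      then show False by simp
    qed
  qed
  have conL0: "connected L0"
    by (rule haus_limit_connected[of L0 "\<lambda>k. Ls (r k)"]) (use cL0 Lcon haus Lne in auto)
  have gu: "uniformly_continuous_on S g"
    using compact_uniformly_continuous[OF continuous_on_subset[OF gc] cS] by simp
  have diamL0: "1 / real n \<le> diameter (g ` L0)"
  proof (rule field_le_epsilon)
    fix \<tau> :: real assume \<tau>: "\<tau> > 0"
    have \<tau>3: "\<tau> / 3 > 0" and \<tau>6: "\<tau> / 6 > 0" using \<tau> by simp_all
    obtain d where d: "d > 0" "\<forall>x\<in>S. \<forall>x'\<in>S. dist x' x < d \<longrightarrow> dist (g x') (g x) < \<tau> / 3"
      using gu \<tau>3 unfolding uniformly_continuous_on_def by blast
    have "eventually (\<lambda>k. (\<forall>w\<in>Ls (r k). infdist w L0 < d) \<and> 1 / real (Suc (r k)) < \<tau> / 6) sequentially"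
      using haus[OF d(1)] eps[OF \<tau>6] by eventually_elim auto
    then obtain k where k: "\<forall>w\<in>Ls (r k). infdist w L0 < d" "1 / real (Suc (r k)) < \<tau> / 6"
      unfolding eventually_sequentially by blast
    let ?\<Lambda> = "Ls (r k)" and ?G = "Gs (r k)"
    have "compact (?G ` ?\<Lambda>)" using compact_continuous_image[OF continuous_on_subset[OF Gc] Lc] by blast
    moreover have "?G ` ?\<Lambda> \<noteq> {}" using Lne by blast
    ultimately obtain p q where pq: "p \<in> ?\<Lambda>" "q \<in> ?\<Lambda>" "dist (?G p) (?G q) = diameter (?G ` ?\<Lambda>)"
      using diameter_compact_attained by blast
    have pq_n: "1 / real n \<le> dist (?G p) (?G q)" using pq Ldiam by simp
    have "f p = ys (r k)" "f q = ys (r k)" using pq Lf by auto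
    then have Gp: "dist (?G p) (g p) < 1 / real (Suc (r k))" and Gq: "dist (?G q) (g q) < 1 / real (Suc (r k))"
      using Gd by blast+
    obtain p' where p': "p' \<in> L0" "dist p p' < d" using infdist_lessE[of p L0 d] k(1) pq L0ne by blast
    obtain q' where q': "q' \<in> L0" "dist q q' < d" using infdist_lessE[of q L0 d] k(1) pq L0ne by blast
    have "p \<in> S" "q \<in> S" "p' \<in> S" "q' \<in> S" using pq p' q' LS L0S by blast+
    then have gp: "dist (g p') (g p) < \<tau> / 3" and gq: "dist (g q') (g q) < \<tau> / 3"
      using d(2) p'(2) q'(2) by (simp_all add: dist_commute)
    have "compact (g ` L0)" using compact_continuous_image[OF continuous_on_subset[OF gc] cL0] by blast
    then have "dist (g p') (g q') \<le> diameter (g ` L0)"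
      using diameter_bounded_bound[OF compact_imp_bounded] p' q' by blast
    moreover have "dist (?G p) (?G q) \<le> dist (?G p) (g p) + dist (g p) (?G q)" by (rule dist_triangle)
    moreover have "dist (g p) (?G q) \<le> dist (g p) (g p') + dist (g p') (?G q)" by (rule dist_triangle)
    moreover have "dist (g p') (?G q) \<le> dist (g p') (g q') + dist (g q') (?G q)" by (rule dist_triangle)
    moreover have "dist (g q') (?G q) \<le> dist (g q') (g q) + dist (g q) (?G q)" by (rule dist_triangle)
    moreover have "dist (g p) (g p') = dist (g p') (g p)" "dist (g q) (?G q) = dist (?G q) (g q)"
      by (simp_all add: dist_commute)
    ultimately show "1 / real n \<le> diameter (g ` L0) + \<tau>"
      using pq_n Gp Gq gp gq k(2) by linarith
  qed
  obtain x where xL0: "x \<in> L0" and xC: "fib_comp g f y x \<subseteq> nbhd_set L0 (1 / real m)"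
    using gK[OF L0F L0ne cL0 conL0 diamL0] by blast
  define P where "P = g -` {g x} \<inter> f -` {y}"
  have "closed (g -` {g x})" by (rule closed_vimage[OF closed_singleton gc])
  then have cP: "compact P" unfolding P_def using closed_Int_compact fib by blast
  have xP: "x \<in> P" using L0F xL0 by (auto simp: P_def)
  have oW: "open (nbhd_set L0 (1 / real m))" by (simp add: nbhd_set_def open_infdist_less)
  have Csub: "connected_component_set P x \<subseteq> nbhd_set L0 (1 / real m)"
    using xC by (simp add: fib_comp_def P_def)
  obtain U0 V0 where cU0: "compact U0" and cV0: "compact V0" and UV0: "U0 \<inter> V0 = {}" "U0 \<union> V0 = P"
    and CU0: "connected_component_set P x \<subseteq> U0" and U0W: "U0 \<subseteq> nbhd_set L0 (1 / real m)"
    by (rule comp_clopen_sep[OF cP xP Csub oW])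
  have xU0: "x \<in> U0" using CU0 xP connected_component_refl by blast
  have "continuous_on U0 (\<lambda>w. infdist w L0)" by (intro continuous_on_infdist continuous_on_id)
  then obtain u where u: "u \<in> U0" "\<forall>v\<in>U0. infdist v L0 \<le> infdist u L0"
    using continuous_attains_sup[OF cU0] xU0 by blast
  define \<eta> where "\<eta> = 1 / real m - infdist u L0"
  have \<eta>: "\<eta> > 0" using u(1) U0W by (auto simp: \<eta>_def nbhd_set_def)
  have hU: "\<forall>v\<in>U0. infdist v L0 \<le> 1 / real m - \<eta>" using u by (simp add: \<eta>_def)
  obtain d0 where d0: "d0 > 0" "\<forall>a\<in>U0. \<forall>b\<in>V0. d0 \<le> dist a b"
    using sep_compact_closed[OF cU0 compact_imp_closed[OF cV0] UV0(1)] by blast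
  define \<rho> where "\<rho> = min (d0 / 3) (\<eta> / 3)"
  have \<rho>: "\<rho> > 0" "\<rho> \<le> d0 / 3" "\<rho> \<le> \<eta> / 3" using d0 \<eta> by (auto simp: \<rho>_def)
  define O1 where "O1 = (\<Union>a\<in>U0. ball a \<rho>)"
  define O2 where "O2 = (\<Union>b\<in>V0. ball b \<rho>)"
  have oO: "open O1" "open O2" by (auto simp: O1_def O2_def intro!: open_UN)
  have dO: "O1 \<inter> O2 = {}"
  proof (rule ccontr)
    assume "O1 \<inter> O2 \<noteq> {}"
    then obtain w a b where "a \<in> U0" "b \<in> V0" "dist a w < \<rho>" "dist b w < \<rho>"
      by (auto simp: O1_def O2_def)
    moreover have "dist a b \<le> dist a w + dist b w" using dist_triangle3[of a b w] by (simp add: dist_commute)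
    ultimately show False using d0 \<rho> by fastforce
  qed
  have O1good: "infdist w L0 < 1 / real m - 2 * \<eta> / 3" if wO: "w \<in> O1" for w
  proof -
    obtain a where a: "a \<in> U0" "dist a w < \<rho>" using wO by (auto simp: O1_def)
    have "infdist w L0 \<le> infdist a L0 + dist w a" by (rule infdist_triangle)
    moreover have "infdist a L0 \<le> 1 / real m - \<eta>" using hU a(1) by blast
    ultimately show ?thesis using a(2) \<rho>(3) by (simp add: dist_commute)
  qed
  have PO: "P \<subseteq> O1 \<union> O2"
  proof
    fix w assume "w \<in> P"
    then have "w \<in> U0 \<or> w \<in> V0" using UV0 by blast
    moreover have "w \<in> ball w \<rho>" using \<rho>(1) by simp
    ultimately show "w \<in> O1 \<union> O2" unfolding O1_def O2_def by blast
  qed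
  define h where "h w = dist (f w) y + dist (g w) (g x)" for w
  define T1 where "T1 = S - (O1 \<union> O2)"
  have cT1: "compact T1" unfolding T1_def using compact_diff[OF cS] oO by blast
  have hc: "continuous_on T1 h" unfolding h_def
    by (intro continuous_on_add continuous_on_dist continuous_on_const continuous_on_subset[OF cf] continuous_on_subset[OF gc]) auto
  obtain \<theta> where \<theta>: "\<theta> > 0" "\<forall>w\<in>T1. \<theta> \<le> h w"
  proof (cases "T1 = {}")
    case True then show thesis using that[of 1] by auto
  next
    case False
    then obtain t0 where t0: "t0 \<in> T1" "\<forall>w\<in>T1. h t0 \<le> h w"
      using continuous_attains_inf[OF cT1 False hc] by blast
    have "h t0 > 0"
    proof (rule ccontr)
      assume "\<not> h t0 > 0"
      then have "f t0 = y" "g t0 = g x" unfolding h_def using zero_le_dist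
        by (smt (verit) dist_eq_0_iff)+
      then have "t0 \<in> P" by (simp add: P_def)
      then show False using PO t0(1) by (auto simp: T1_def)
    qed
    then show thesis using that t0 by blast
  qed
  obtain \<delta>g where \<delta>g: "\<delta>g > 0" "\<forall>x'. dist x' x < \<delta>g \<longrightarrow> dist (g x') (g x) < \<theta> / 4"
    using gc \<theta>(1) unfolding continuous_on_iff by (metis UNIV_I divide_pos_pos zero_less_numeral)
  define \<sigma> where "\<sigma> = min (min \<delta>g \<rho>) (\<eta> / 3)"
  have \<sigma>: "\<sigma> > 0" "\<sigma> \<le> \<delta>g" "\<sigma> \<le> \<rho>" "\<sigma> \<le> \<eta> / 3" using \<delta>g \<rho> \<eta> by (auto simp: \<sigma>_def)
  have \<theta>4: "\<theta> / 4 > 0" using \<theta> by simp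
  have "eventually (\<lambda>k. ((\<forall>w\<in>Ls (r k). infdist w L0 < \<sigma>) \<and> (\<forall>w\<in>L0. infdist w (Ls (r k)) < \<sigma>))
      \<and> 1 / real (Suc (r k)) < \<theta> / 4 \<and> dist (ys (r k)) y < \<theta> / 4) sequentially"
    using haus[OF \<sigma>(1)] eps[OF \<theta>4] Ylim[OF \<theta>4] by eventually_elim auto
  then obtain k where k: "\<forall>w\<in>L0. infdist w (Ls (r k)) < \<sigma>" "1 / real (Suc (r k)) < \<theta> / 4"
    "dist (ys (r k)) y < \<theta> / 4"
    unfolding eventually_sequentially by blast
  obtain xk where xk: "xk \<in> Ls (r k)" "dist x xk < \<sigma>"
    using infdist_lessE[of x "Ls (r k)" \<sigma>] k(1) xL0 Lne by blast
  have fxk: "f xk = ys (r k)" using xk Lf by blast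
  define Pk where "Pk = Gs (r k) -` {Gs (r k) xk} \<inter> f -` {ys (r k)}"
  define Ck where "Ck = connected_component_set Pk xk"
  have bad: "\<not> Ck \<subseteq> nbhd_set (Ls (r k)) (1 / real m)"
    using Lbad[OF xk(1)] by (simp add: Ck_def Pk_def fib_comp_def)
  have PkO: "Pk \<subseteq> O1 \<union> O2"
  proof
    fix w assume w: "w \<in> Pk"
    then have fw: "f w = ys (r k)" and Gw: "Gs (r k) w = Gs (r k) xk" by (auto simp: Pk_def)
    then have "w \<in> S" by (auto simp: S_def)
    have a1: "dist (Gs (r k) w) (g w) < 1 / real (Suc (r k))" using Gd fw by blast
    have a2: "dist (Gs (r k) xk) (g xk) < 1 / real (Suc (r k))" using Gd fxk by blast
    have "dist xk x < \<delta>g" using xk(2) \<sigma>(2) by (simp add: dist_commute)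
    then have a3: "dist (g xk) (g x) < \<theta> / 4" using \<delta>g(2) by blast
    have "dist (g w) (g x) \<le> dist (g w) (Gs (r k) w) + dist (Gs (r k) w) (g x)" by (rule dist_triangle)
    moreover have "dist (Gs (r k) xk) (g x) \<le> dist (Gs (r k) xk) (g xk) + dist (g xk) (g x)" by (rule dist_triangle)
    moreover have "dist (g w) (Gs (r k) w) = dist (Gs (r k) w) (g w)" by (simp add: dist_commute)
    moreover have "dist (f w) y < \<theta> / 4" using fw k(3) by simp
    moreover have "dist (Gs (r k) w) (g x) = dist (Gs (r k) xk) (g x)" using Gw by simp
    ultimately have "h w < \<theta>" unfolding h_def using a1 a2 a3 k(2) by linarith
    then have "w \<notin> T1" using \<theta>(2) by force
    then show "w \<in> O1 \<union> O2" using \<open>w \<in> S\<close> by (auto simp: T1_def)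
  qed
  have "dist x xk < \<rho>" using xk(2) \<sigma>(3) by linarith
  then have xkO1: "xk \<in> O1" using xU0 unfolding O1_def by auto
  have xkPk: "xk \<in> Pk" using fxk by (simp add: Pk_def)
  have xkCk: "xk \<in> Ck" using xkPk connected_component_refl by (simp add: Ck_def)
  have CkO: "Ck \<subseteq> O1 \<union> O2" using PkO connected_component_subset[of Pk xk] by (auto simp: Ck_def)
  have "O1 \<inter> Ck = {} \<or> O2 \<inter> Ck = {}"
    using connectedD[OF connected_connected_component[of Pk xk] oO(1) oO(2)] dO CkO by (auto simp: Ck_def)
  then have CkO1: "Ck \<subseteq> O1" using xkO1 xkCk CkO by blast
  have "Ck \<subseteq> nbhd_set (Ls (r k)) (1 / real m)"
  proof
    fix w assume "w \<in> Ck"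
    then have w: "infdist w L0 < 1 / real m - 2 * \<eta> / 3" using CkO1 O1good by blast
    then obtain p where p: "p \<in> L0" "dist w p < 1 / real m - 2 * \<eta> / 3" using infdist_lessE L0ne by blast
    have "infdist p (Ls (r k)) < \<sigma>" using k(1) p(1) by blast
    moreover have "infdist w (Ls (r k)) \<le> infdist p (Ls (r k)) + dist w p" by (rule infdist_triangle)
    ultimately have "infdist w (Ls (r k)) < 1 / real m" using p(2) \<sigma>(4) \<eta> by linarith
    then show "w \<in> nbhd_set (Ls (r k)) (1 / real m)" by (simp add: nbhd_set_def)
  qed
  then show False using bad by blast
qed

end
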